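(* Let $\bar k_0>0$ and, for each $k>\bar k_0$, let $(u_{1,k},u_{2,k})\in O_\varepsilon$ be an $L$-periodic solution of \[ \begin{cases}-u_1''=\mu_1(1-u_1)u_1-k\omega u_1u_2\\ -d u_2''=\mu_2(1-u_2)u_2-\alpha k\omega u_1u_2\end{cases} \] such that $(u_{1,k},u_{2,k})\to(v^+/\alpha,v^-/d)$ in $\mathscr{C}^{0,\frac12}$ as $k\to+\infty$. Let $(\varphi_k,\psi_k)$ be the positive $L$-periodic principal eigenfunction described in the context, normalized by $\max_{[0,L]}(\alpha\varphi_k+d\psi_k)=1$. Then for any $\epsilon'>0$ and $\delta>0$ there exists $\bar k>0$ such that \[ \sup_{\{v^->\epsilon'\}}\varphi_k+\sup_{\{v^+>\epsilon'\}}\psi_k\le\delta\qquad\text{for all }k\ge\bar k . \]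
   Context: Fix $L>0$, $\alpha>0$, $d>0$, positive $L$-periodic $\mu_1,\mu_2\in L^\infty(\mathbb{R})$ and a positive smooth $L$-periodic $\omega$. $v\in\mathscr{C}^{1,1}$ is a fixed $L$-periodic sign-changing solution of $-v''=\frac{\mu_1}{\alpha}(\alpha-v)v^+-\frac{\mu_2}{d^2}(d+v)v^-$; $z^+=\max(z,0)$, $z^-=-\min(z,0)$. $X=\mathscr{C}^{0,1/2}_{L\text{-per}}$, $\eta>0$ and $\varepsilon>0$ fixed, $O_\varepsilon=\{u\in X^2: u_1>0,\ u_2>0,\ \|\alpha u_1-du_2-v\|_{L^\infty}<\eta,\ \|u-(v^+/\alpha,v^-/d)\|_{X^2}<2\varepsilon\}$. $(\lambda_{1,k},(\varphi_k,\psi_k))$ is the periodic principal eigenpair of \[ -\begin{pmatrix}\frac{d^2}{dx^2}+\mu_1(1-2u_{1,k})-k\omega u_{2,k} & k\omega u_{1,k}\\ \alpha k\omega u_{2,k} & d\frac{d^2}{dx^2}+\mu_2(1-2u_{2,k})-\alpha k\omega u_{1,k}\end{pmatrix}, \] i.e. $\lambda_{1,k}$ is the unique real eigenvalue with an $L$-periodic eigenfunction $(\varphi_k,\psi_k)$ having $\varphi_k>0$, $\psi_k>0$. *)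

theory Defs
  imports "HOL-Analysis.Analysis"
begin

definition pospart :: "real \<Rightarrow> real" where "pospart z = max z 0"
definition negpart :: "real \<Rightarrow> real" where "negpart z = - min z 0"

definition L_periodic :: "real \<Rightarrow> (real \<Rightarrow> real) \<Rightarrow> bool" where
  "L_periodic L f \<longleftrightarrow> (\<forall>x. f (x + L) = f x)"

definition C11_second :: "(real \<Rightarrow> real) \<Rightarrow> (real \<Rightarrow> real) \<Rightarrow> bool" where
  "C11_second f w \<longleftrightarrow> (\<exists>f'. (\<forall>x. (f has_real_derivative f' x) (at x))
      \<and> (\<exists>C. \<forall>x y. \<bar>f' x - f' y\<bar> \<le> C * \<bar>x - y\<bar>)
      \<and> (AE x in lebesgue. (f' has_real_derivative w x) (at x)))"

definition smooth_fun :: "(real \<Rightarrow> real) \<Rightarrow> bool" where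
  "smooth_fun f \<longleftrightarrow> (\<forall>n x. ((deriv ^^ n) f) differentiable (at x))"

definition sup_norm :: "(real \<Rightarrow> real) \<Rightarrow> real" where
  "sup_norm f = Sup (range (\<lambda>x. \<bar>f x\<bar>))"

definition holder_quotients :: "(real \<Rightarrow> real) \<Rightarrow> real set" where
  "holder_quotients f = {\<bar>f x - f y\<bar> / \<bar>x - y\<bar> powr (1/2) | x y. x \<noteq> y}"

definition holder_norm :: "(real \<Rightarrow> real) \<Rightarrow> real" where
  "holder_norm f = sup_norm f + Sup (holder_quotients f)"

definition in_X :: "real \<Rightarrow> (real \<Rightarrow> real) \<Rightarrow> bool" where
  "in_X L f \<longleftrightarrow> L_periodic L f \<and> continuous_on UNIV f \<and> bounded (range f)
      \<and> bdd_above (holder_quotients f)"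

text \<open>Norm on X^2: maximum of the component norms.\<close>
definition O_eps :: "real \<Rightarrow> real \<Rightarrow> real \<Rightarrow> (real \<Rightarrow> real) \<Rightarrow> real \<Rightarrow> real
    \<Rightarrow> (real \<Rightarrow> real) \<Rightarrow> (real \<Rightarrow> real) \<Rightarrow> bool" where
  "O_eps L \<alpha> d v \<eta> \<epsilon> u1 u2 \<longleftrightarrow> in_X L u1 \<and> in_X L u2
     \<and> (\<forall>x. u1 x > 0) \<and> (\<forall>x. u2 x > 0)
     \<and> sup_norm (\<lambda>x. \<alpha> * u1 x - d * u2 x - v x) < \<eta>
     \<and> max (holder_norm (\<lambda>x. u1 x - pospart (v x) / \<alpha>))
           (holder_norm (\<lambda>x. u2 x - negpart (v x) / d)) < 2 * \<epsilon>"

definition sup_over :: "real set \<Rightarrow> (real \<Rightarrow> real) \<Rightarrow> real" where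
  "sup_over S f = (if S = {} then 0 else Sup (f ` S))"

end

theory Submission
  imports Defs
begin



lemma per_nat: assumes "L_periodic L f" shows "f (y + real n * L) = f y"
proof (induction n)
  case 0 then show ?case by simp
next
  case (Suc n)
  have "f (y + real (Suc n) * L) = f ((y + real n * L) + L)" by (simp add: algebra_simps)
  also have "\<dots> = f (y + real n * L)" using assms unfolding L_periodic_def by blast
  finally show ?case using Suc by simp
qed

lemma per_red: assumes "L > 0" "L_periodic L f" shows "\<exists>y\<in>{0..L}. f x = f y"
proof -
  define n where "n = \<lfloor>x / L\<rfloor>"
  define y where "y = x - of_int n * L"
  have "of_int n \<le> x / L" unfolding n_def by simp
  then have y0: "0 \<le> y" unfolding y_def using assms(1) by (simp add: le_divide_eq)
  have "x / L < of_int n + 1" unfolding n_def by simp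
  then have "x < (of_int n + 1) * L" using assms(1) by (simp add: divide_less_eq)
  then have y1: "y \<le> L" unfolding y_def by (simp add: algebra_simps)
  have "f x = f y"
  proof (cases "n \<ge> 0")
    case True
    then have "x = y + real (nat n) * L" unfolding y_def by simp
    then show ?thesis using per_nat[OF assms(2)] by metis
  next
    case False
    then have "y = x + real (nat (-n)) * L" unfolding y_def by simp
    then show ?thesis using per_nat[OF assms(2)] by metis
  qed
  then show ?thesis using y0 y1 by auto
qed

lemma per_min: assumes "L > 0" "L_periodic L f" "continuous_on UNIV f"
  shows "\<exists>x0. \<forall>x. f x0 \<le> f x"
proof -
  obtain x0 where "x0 \<in> {0..L}" "\<forall>y\<in>{0..L}. f x0 \<le> f y"
    using continuous_attains_inf[OF compact_Icc _ continuous_on_subset[OF assms(3) subset_UNIV], of 0 L] assms(1) by fastforce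
  then show ?thesis using per_red[OF assms(1,2)] by metis
qed

lemma per_max: assumes "L > 0" "L_periodic L f" "continuous_on UNIV f"
  shows "\<exists>x0. \<forall>x. f x \<le> f x0"
proof -
  obtain x0 where "x0 \<in> {0..L}" "\<forall>y\<in>{0..L}. f y \<le> f x0"
    using continuous_attains_sup[OF compact_Icc _ continuous_on_subset[OF assms(3) subset_UNIV], of 0 L] assms(1) by fastforce
  then show ?thesis using per_red[OF assms(1,2)] by metis
qed



lemma lip_cont:
  fixes g :: "real \<Rightarrow> real"
  assumes lip: "\<forall>x y. \<bar>g x - g y\<bar> \<le> C * \<bar>x - y\<bar>"
  shows "continuous_on UNIV g" "C \<ge> 0"
proof -
  show C: "C \<ge> 0" using lip[rule_format, of 0 1] by simp
  have "C-lipschitz_on UNIV g"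
    by (rule lipschitz_onI) (use lip C in \<open>auto simp: dist_real_def\<close>)
  then show "continuous_on UNIV g" by (rule lipschitz_on_continuous_on)
qed

lemma lip_mono_weak:
  fixes g :: "real \<Rightarrow> real"
  assumes lip: "\<forall>x y. \<bar>g x - g y\<bar> \<le> C * \<bar>x - y\<bar>"
    and ab: "a < b"
    and N: "negligible N"
    and der: "\<forall>t. a < t \<and> t < b \<and> t \<notin> N \<longrightarrow> (\<exists>D>0. (g has_real_derivative D) (at t))"
  shows "g a \<le> g b"
proof (rule ccontr)
  assume "\<not> g a \<le> g b"
  then have gba: "g b < g a" by simp
  have C: "C \<ge> 0" and cont: "continuous_on UNIV g" using lip_cont[OF lip] by auto
  have negim: "negligible (g ` (N \<inter> {a<..<b}))"
  proof (rule negligible_locally_Lipschitz_image)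
    show "negligible (N \<inter> {a<..<b})" using N negligible_Int by blast
    fix x assume "x \<in> N \<inter> {a<..<b}"
    show "\<exists>T B. open T \<and> x \<in> T \<and> (\<forall>y\<in>N \<inter> {a<..<b} \<inter> T. norm (g y - g x) \<le> B * norm (y - x))"
      by (rule exI[of _ UNIV], rule exI[of _ C]) (use lip in auto)
  qed simp
  have sub: "{g b<..<g a} \<subseteq> g ` (N \<inter> {a<..<b})"
  proof
    fix y assume "y \<in> {g b<..<g a}"
    then have y1: "g b < y" and y2: "y < g a" by auto
    define T where "T = {a..b} \<inter> {t. y \<le> g t}"
    define x where "x = Sup T"
    have aT: "a \<in> T" using ab y2 unfolding T_def by auto
    have bddT: "bdd_above T" unfolding T_def by (rule bdd_aboveI[of _ b]) auto
    have clT: "closed T" unfolding T_def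
      by (intro closed_Int closed_atLeastAtMost closed_Collect_le continuous_on_const cont)
    have xT: "x \<in> T" unfolding x_def using closed_contains_Sup[OF _ bddT clT] aT by blast
    have upper: "\<And>t. t \<in> T \<Longrightarrow> t \<le> x" unfolding x_def using bddT by (simp add: cSup_upper)
    have gx: "y \<le> g x" and xab: "a \<le> x" "x \<le> b" using xT unfolding T_def by auto
    have xb: "x < b" using xab gx y1 by (metis order.not_eq_order_implies_strict not_le)
    have right: "\<And>t. x < t \<Longrightarrow> t \<le> b \<Longrightarrow> g t < y"
    proof -
      fix t assume "x < t" "t \<le> b"
      show "g t < y"
      proof (rule ccontr)
        assume "\<not> g t < y"
        then have "t \<in> T" unfolding T_def using \<open>x < t\<close> \<open>t \<le> b\<close> xab by auto
        then show False using upper \<open>x < t\<close> by force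
      qed
    qed
    have gxy: "g x = y"
    proof (rule ccontr)
      assume "g x \<noteq> y"
      then have pos: "g x - y > 0" using gx by simp
      define mm where "mm = min (b - x) ((g x - y) / (C + 1))"
      define h where "h = mm / 2"
      have mm0: "mm > 0" unfolding mm_def using xb pos C by simp
      have mm1: "mm \<le> b - x" "mm \<le> (g x - y) / (C + 1)" unfolding mm_def by simp_all
      have h0: "h > 0" unfolding h_def using mm0 by simp
      have hb: "x + h \<le> b" unfolding h_def using mm1 mm0 by simp
      have "(C + 1) * mm \<le> g x - y" using mm1(2) C by (simp add: le_divide_eq mult.commute)
      then have "(C + 1) * h \<le> (g x - y) / 2" unfolding h_def by simp
      then have Ch: "C * h < g x - y" using h0 pos by (simp add: algebra_simps)
      have "\<bar>g (x + h) - g x\<bar> \<le> C * h" using lip[rule_format, of "x+h" x] h0 by simp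
      then have "g (x + h) > y" using Ch by linarith
      then show False using right[of "x+h"] h0 hb by simp
    qed
    have ax: "a < x"
    proof (rule ccontr)
      assume "\<not> a < x"
      then have "x = a" using xab by simp
      then show False using gxy y2 by simp
    qed
    have xN: "x \<in> N"
    proof (rule ccontr)
      assume "x \<notin> N"
      then obtain D where D: "D > 0" "(g has_real_derivative D) (at x)" using der ax xb by blast
      obtain d where d: "d > 0" "\<forall>h>0. h < d \<longrightarrow> g x < g (x + h)"
        using DERIV_pos_inc_right[OF D(2) D(1)] by blast
      define mm where "mm = min d (b - x)"
      have mm: "mm > 0" "mm \<le> d" "mm \<le> b - x" unfolding mm_def using d xb by auto
      define h where "h = mm / 2"
      have "h > 0" "h < d" "x + h \<le> b" unfolding h_def using mm by auto
      then show False using d right[of "x+h"] gxy by force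
    qed
    show "y \<in> g ` (N \<inter> {a<..<b})" using xN ax xb gxy by force
  qed
  have "negligible {g b<..<g a}" using negligible_subset[OF negim sub] .
  moreover have "{g b<..<g a} \<noteq> {}" using gba dense by (simp)
  ultimately show False using open_not_negligible[of "{g b<..<g a}"] by simp
qed

lemma lip_mono_strict:
  fixes g :: "real \<Rightarrow> real"
  assumes lip: "\<forall>x y. \<bar>g x - g y\<bar> \<le> C * \<bar>x - y\<bar>"
    and ab: "a < b"
    and N: "negligible N"
    and der: "\<forall>t. a < t \<and> t < b \<and> t \<notin> N \<longrightarrow> (\<exists>D>0. (g has_real_derivative D) (at t))"
  shows "g a < g b"
proof (rule ccontr)
  assume "\<not> g a < g b"
  moreover have "g a \<le> g b" by (rule lip_mono_weak[OF lip ab N der])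
  ultimately have eq: "g a = g b" by simp
  have const: "g t = g a" if "a < t" "t < b" for t
  proof -
    have "g a \<le> g t" by (rule lip_mono_weak[OF lip \<open>a < t\<close> N]) (use der that in auto)
    moreover have "g t \<le> g b" by (rule lip_mono_weak[OF lip \<open>t < b\<close> N]) (use der that in auto)
    ultimately show ?thesis using eq by simp
  qed
  have "\<not> negligible {a<..<b}" by (rule open_not_negligible) (use ab in auto)
  then have "\<not> {a<..<b} \<subseteq> N" using negligible_subset[OF N] by blast
  then obtain t where t0: "t \<in> {a<..<b}" "t \<notin> N" by blast
  then have t: "a < t" "t < b" "t \<notin> N" by auto
  then obtain D where D: "D > 0" "(g has_real_derivative D) (at t)" using der by blast
  obtain d where d: "d > 0" "\<forall>h>0. h < d \<longrightarrow> g t < g (t + h)"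
    using DERIV_pos_inc_right[OF D(2) D(1)] by blast
  define mm where "mm = min d (b - t)"
  have mm: "mm > 0" "mm \<le> d" "mm \<le> b - t" unfolding mm_def using d t by auto
  define h where "h = mm / 2"
  have "h > 0" "h < d" "t + h < b" unfolding h_def using mm by auto
  then show False using d const[of "t+h"] const[of t] t by force
qed



lemma ae_negl:
  assumes "AE x in lebesgue. P x"
  shows "\<exists>N. negligible N \<and> (\<forall>x. x \<notin> N \<longrightarrow> P x)"
proof -
  obtain N where N: "{x \<in> space lebesgue. \<not> P x} \<subseteq> N" "emeasure lebesgue N = 0" "N \<in> sets lebesgue"
    using AE_E[OF assms] by blast
  then have "negligible N" by (simp add: negligible_iff_null_sets null_setsI)
  then show ?thesis using N(1) by auto
qed

lemma max_principle:
  fixes z z' :: "real \<Rightarrow> real"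
  assumes dz: "\<forall>x. (z has_real_derivative z' x) (at x)"
    and lip: "\<forall>x y. \<bar>z' x - z' y\<bar> \<le> C * \<bar>x - y\<bar>"
    and ab: "a < b" and za: "z a < 0" and zb: "z b < 0"
    and N: "negligible N"
    and dd: "\<forall>t. a < t \<and> t < b \<and> t \<notin> N \<and> z t > 0 \<longrightarrow> (\<exists>D>0. (z' has_real_derivative D) (at t))"
  shows "\<forall>t\<in>{a..b}. z t \<le> 0"
proof (rule ccontr)
  assume "\<not> (\<forall>t\<in>{a..b}. z t \<le> 0)"
  then obtain t where t: "t \<in> {a..b}" "z t > 0" by force
  have isc: "isCont z x" for x using dz DERIV_isCont by blast
  then have cont: "continuous_on {a..b} z" by (simp add: continuous_at_imp_continuous_on)
  obtain p where p: "p \<in> {a..b}" "\<forall>y\<in>{a..b}. z y \<le> z p"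
    using continuous_attains_sup[OF compact_Icc _ cont] ab by auto
  have zp: "z p > 0" using p t by force
  have ap: "a < p"
  proof (rule ccontr)
    assume "\<not> a < p" then have "p = a" using p(1) by simp
    then show False using zp za by simp
  qed
  have pb: "p < b"
  proof (rule ccontr)
    assume "\<not> p < b" then have "p = b" using p(1) by simp
    then show False using zp zb by simp
  qed
  define d0 where "d0 = min (p - a) (b - p)"
  have d0: "d0 > 0" "d0 \<le> p - a" "d0 \<le> b - p" unfolding d0_def using ap pb by auto
  have z'p: "z' p = 0"
  proof (rule DERIV_local_max[OF dz[rule_format] d0(1)])
    show "\<forall>y. \<bar>p - y\<bar> < d0 \<longrightarrow> z y \<le> z p" using p(2) d0 by (auto simp: abs_less_iff)
  qed
  have "(z \<longlongrightarrow> z p) (at p)" using isc[of p] by (simp add: isCont_def)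
  then have "eventually (\<lambda>y. 0 < z y) (at p)" using zp order_tendstoD(1) by blast
  then obtain e where e: "e > 0" "\<forall>y. y \<noteq> p \<and> dist y p < e \<longrightarrow> 0 < z y"
    unfolding eventually_at by auto
  define mm where "mm = min e (b - p)"
  have mm: "mm > 0" "mm \<le> e" "mm \<le> b - p" unfolding mm_def using e pb by auto
  define q where "q = p + mm / 2"
  have pq: "p < q" "q < b" "q - p < e" unfolding q_def using mm by auto
  have zpos: "z y > 0" if "p \<le> y" "y \<le> q" for y
    using e zp that pq by (cases "y = p") (auto simp: dist_real_def)
  have z'pos: "z' s > 0" if "p < s" "s \<le> q" for s
  proof -
    have "z' p < z' s"
    proof (rule lip_mono_strict[OF lip \<open>p < s\<close> N])
      show "\<forall>t. p < t \<and> t < s \<and> t \<notin> N \<longrightarrow> (\<exists>D>0. (z' has_real_derivative D) (at t))"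
        using dd zpos ap that pq by auto
    qed
    then show ?thesis using z'p by simp
  qed
  obtain \<xi> where xi: "p < \<xi>" "\<xi> < q" "z q - z p = (q - p) * z' \<xi>"
    using MVT2[OF pq(1), of z z'] dz by blast
  have "(q - p) * z' \<xi> > 0" using z'pos[of \<xi>] xi pq by simp
  then have "z q > z p" using xi by simp
  moreover have "q \<in> {a..b}" using pq ap by auto
  ultimately show False using p(2) by force
qed

lemma comparison:
  fixes f f' g :: "real \<Rightarrow> real"
  assumes df: "\<forall>x. (f has_real_derivative f' x) (at x)"
    and lip: "\<forall>x y. \<bar>f' x - f' y\<bar> \<le> C * \<bar>x - y\<bar>"
    and dd: "AE t in lebesgue. (f' has_real_derivative g t) (at t)"
    and r: "r > 0" and A: "A \<ge> 0"
    and e1: "f (x0 - r) < s + A * r^2" and e2: "f (x0 + r) < s + A * r^2"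
    and key: "AE t in lebesgue. x0 - r < t \<longrightarrow> t < x0 + r \<longrightarrow> f t > s + A * (t - x0)^2 \<longrightarrow> g t > 2 * A"
  shows "f x0 \<le> s"
proof -
  define z where "z = (\<lambda>t. f t - s - A * (t - x0)^2)"
  define z' where "z' = (\<lambda>t. f' t - 2 * A * (t - x0))"
  have dz: "\<forall>x. (z has_real_derivative z' x) (at x)"
  proof
    fix x
    show "(z has_real_derivative z' x) (at x)"
      unfolding z_def z'_def
      by (auto intro!: derivative_eq_intros df[rule_format])
  qed
  have lipz: "\<forall>x y. \<bar>z' x - z' y\<bar> \<le> (C + 2 * A) * \<bar>x - y\<bar>"
  proof (intro allI)
    fix x y
    have "\<bar>z' x - z' y\<bar> = \<bar>(f' x - f' y) - 2 * A * (x - y)\<bar>" unfolding z'_def by (simp add: algebra_simps)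
    also have "\<dots> \<le> \<bar>f' x - f' y\<bar> + \<bar>2 * A * (x - y)\<bar>" by (rule abs_triangle_ineq4)
    also have "\<dots> \<le> C * \<bar>x - y\<bar> + 2 * A * \<bar>x - y\<bar>" using lip A by (simp add: abs_mult)
    finally show "\<bar>z' x - z' y\<bar> \<le> (C + 2 * A) * \<bar>x - y\<bar>" by (simp add: algebra_simps)
  qed
  have "AE t in lebesgue. (f' has_real_derivative g t) (at t) \<and>
      (x0 - r < t \<longrightarrow> t < x0 + r \<longrightarrow> f t > s + A * (t - x0)^2 \<longrightarrow> g t > 2 * A)"
    using dd key by eventually_elim auto
  then obtain N where N: "negligible N" and NN: "\<forall>t. t \<notin> N \<longrightarrow> (f' has_real_derivative g t) (at t) \<and>
      (x0 - r < t \<longrightarrow> t < x0 + r \<longrightarrow> f t > s + A * (t - x0)^2 \<longrightarrow> g t > 2 * A)"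
    using ae_negl by blast
  have "\<forall>t\<in>{x0 - r..x0 + r}. z t \<le> 0"
  proof (rule max_principle[OF dz lipz _ _ _ N])
    show "x0 - r < x0 + r" using r by simp
    show "z (x0 - r) < 0" using e1 unfolding z_def by simp
    show "z (x0 + r) < 0" using e2 unfolding z_def by simp
    show "\<forall>t. x0 - r < t \<and> t < x0 + r \<and> t \<notin> N \<and> 0 < z t \<longrightarrow> (\<exists>D>0. (z' has_real_derivative D) (at t))"
    proof (intro allI impI)
      fix t assume H: "x0 - r < t \<and> t < x0 + r \<and> t \<notin> N \<and> 0 < z t"
      then have gt: "g t > 2 * A" and dft: "(f' has_real_derivative g t) (at t)"
        using NN unfolding z_def by auto
      have "(z' has_real_derivative g t - 2 * A) (at t)"
        unfolding z'_def by (auto intro!: derivative_eq_intros dft)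
      then show "\<exists>D>0. (z' has_real_derivative D) (at t)" using gt by (intro exI[of _ "g t - 2 * A"]) auto
    qed
  qed
  then have "z x0 \<le> 0" using r by auto
  then show ?thesis unfolding z_def by simp
qed



lemma lambda_bound:
  fixes f f' gf u u' gu P :: "real \<Rightarrow> real"
  assumes L: "L > 0" and perf: "\<forall>x. f (x + L) = f x" and peru: "\<forall>x. u (x + L) = u x"
    and fpos: "\<forall>x. f x > 0" and upos: "\<forall>x. u x > 0"
    and df: "\<forall>x. (f has_real_derivative f' x) (at x)"
    and du: "\<forall>x. (u has_real_derivative u' x) (at x)"
    and lipf: "\<forall>x y. \<bar>f' x - f' y\<bar> \<le> Cf * \<bar>x - y\<bar>"
    and lipu: "\<forall>x y. \<bar>u' x - u' y\<bar> \<le> Cu * \<bar>x - y\<bar>"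
    and ddf: "AE t in lebesgue. (f' has_real_derivative gf t) (at t)"
    and ddu: "AE t in lebesgue. (u' has_real_derivative gu t) (at t)"
    and Pb: "\<forall>t. \<bar>P t\<bar> \<le> B"
    and ineq: "AE t in lebesgue. gf t \<le> P t * f t - \<beta> * f t"
    and equ: "AE t in lebesgue. gu t = P t * u t"
    and \<beta>: "\<beta> > 0"
  shows False
proof -
  have iscf: "isCont f x" for x using df DERIV_isCont by blast
  have iscu: "isCont u x" for x using du DERIV_isCont by blast
  define q where "q = (\<lambda>x. f x / u x)"
  have cf: "continuous_on UNIV f" using iscf by (simp add: continuous_at_imp_continuous_on)
  have cu: "continuous_on UNIV u" using iscu by (simp add: continuous_at_imp_continuous_on)
  have "\<forall>x\<in>UNIV. u x \<noteq> 0" using upos by (metis less_irrefl)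
  then have qc: "continuous_on UNIV q" unfolding q_def by (rule continuous_on_divide[OF cf cu])
  have qp: "L_periodic L q" unfolding q_def L_periodic_def using perf peru by simp
  obtain xs where xs: "\<forall>x. q xs \<le> q x" using per_min[OF L qp qc] by blast
  define \<tau> where "\<tau> = q xs"
  have \<tau>0: "\<tau> > 0" unfolding \<tau>_def q_def using fpos upos by simp
  define w where "w = (\<lambda>x. f x - \<tau> * u x)"
  define w' where "w' = (\<lambda>x. f' x - \<tau> * u' x)"
  have wge: "w x \<ge> 0" for x
  proof -
    have "\<tau> \<le> f x / u x" using xs unfolding \<tau>_def q_def by simp
    then have "\<tau> * u x \<le> f x" using upos by (simp add: le_divide_eq)
    then show ?thesis unfolding w_def by simp
  qed
  have "u xs \<noteq> 0" using upos by (metis less_irrefl)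
  then have wxs: "w xs = 0" unfolding w_def \<tau>_def q_def by simp
  have dw: "\<forall>x. (w has_real_derivative w' x) (at x)"
  proof
    fix x show "(w has_real_derivative w' x) (at x)"
      unfolding w_def w'_def by (auto intro!: derivative_eq_intros df[rule_format] du[rule_format])
  qed
  have w'xs: "w' xs = 0"
    by (rule DERIV_local_min[OF dw[rule_format] zero_less_one]) (use wge wxs in simp)
  have lipw: "\<forall>x y. \<bar>(- w' x) - (- w' y)\<bar> \<le> (Cf + \<tau> * Cu) * \<bar>x - y\<bar>"
  proof (intro allI)
    fix x y
    define a where "a = f' x - f' y"
    define b where "b = u' x - u' y"
    have e: "(- w' x) - (- w' y) = \<tau> * b - a" unfolding w'_def a_def b_def by (simp add: algebra_simps)
    have ha: "\<bar>a\<bar> \<le> Cf * \<bar>x - y\<bar>" unfolding a_def using lipf by blast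
    have hb: "\<bar>b\<bar> \<le> Cu * \<bar>x - y\<bar>" unfolding b_def using lipu by blast
    have hb2: "\<bar>\<tau> * b\<bar> = \<tau> * \<bar>b\<bar>" using \<tau>0 by (simp add: abs_mult)
    have hb3: "\<tau> * \<bar>b\<bar> \<le> \<tau> * (Cu * \<bar>x - y\<bar>)" using hb \<tau>0 by (simp add: mult_left_mono)
    have tri: "\<bar>\<tau> * b - a\<bar> \<le> \<bar>\<tau> * b\<bar> + \<bar>a\<bar>" by (rule abs_triangle_ineq4)
    have eqc: "(Cf + \<tau> * Cu) * \<bar>x - y\<bar> = Cf * \<bar>x - y\<bar> + \<tau> * (Cu * \<bar>x - y\<bar>)" by (simp add: algebra_simps)
    show "\<bar>(- w' x) - (- w' y)\<bar> \<le> (Cf + \<tau> * Cu) * \<bar>x - y\<bar>"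
      unfolding e eqc using tri hb2 hb3 ha by linarith
  qed
  have "AE t in lebesgue. (f' has_real_derivative gf t) (at t) \<and> (u' has_real_derivative gu t) (at t)
      \<and> gf t \<le> P t * f t - \<beta> * f t \<and> gu t = P t * u t"
    using ddf ddu ineq equ by eventually_elim auto
  then obtain N where N: "negligible N" and NN: "\<forall>t. t \<notin> N \<longrightarrow> (f' has_real_derivative gf t) (at t) \<and> (u' has_real_derivative gu t) (at t)
      \<and> gf t \<le> P t * f t - \<beta> * f t \<and> gu t = P t * u t"
    using ae_negl by blast
  define c where "c = \<beta> * f xs / 4"
  have c0: "c > 0" unfolding c_def using \<beta> fpos by simp
  have "((\<lambda>t. B * w t) \<longlongrightarrow> B * w xs) (at xs)" unfolding w_def
    using iscf[of xs] iscu[of xs] by (intro tendsto_intros) (auto simp: isCont_def)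
  note tB = this
  have "B * w xs < c" using wxs c0 by simp
  then have ev1: "eventually (\<lambda>t. B * w t < c) (at xs)" using order_tendstoD(2)[OF tB] by blast
  have tf: "(f \<longlongrightarrow> f xs) (at xs)" using iscf[of xs] by (simp add: isCont_def)
  have "f xs / 2 < f xs" using fpos by simp
  then have ev2: "eventually (\<lambda>t. f t > f xs / 2) (at xs)" using order_tendstoD(1)[OF tf] by blast
  have "eventually (\<lambda>t. B * w t < c \<and> f t > f xs / 2) (at xs)" using ev1 ev2 by eventually_elim auto
  then obtain e where e: "e > 0" "\<forall>t. t \<noteq> xs \<and> dist t xs < e \<longrightarrow> B * w t < c \<and> f t > f xs / 2"
    unfolding eventually_at by auto
  define s where "s = xs + e / 2"
  have s: "xs < s" "s - xs < e" unfolding s_def using e by auto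
  have negder: "w' t < 0" if "xs < t" "t \<le> s" for t
  proof -
    have "- w' xs < - w' t"
    proof (rule lip_mono_strict[OF lipw \<open>xs < t\<close> N])
      show "\<forall>y. xs < y \<and> y < t \<and> y \<notin> N \<longrightarrow> (\<exists>D>0. ((\<lambda>x. - w' x) has_real_derivative D) (at y))"
      proof (intro allI impI)
        fix y assume H: "xs < y \<and> y < t \<and> y \<notin> N"
        then have near: "B * w y < c" "f y > f xs / 2" using e(2) s that by (auto simp: dist_real_def)
        have ny: "(f' has_real_derivative gf y) (at y)" "(u' has_real_derivative gu y) (at y)"
          "gf y \<le> P y * f y - \<beta> * f y" "gu y = P y * u y" using NN H by auto
        have "((\<lambda>x. - w' x) has_real_derivative - (gf y - \<tau> * gu y)) (at y)"
          unfolding w'_def by (auto intro!: derivative_eq_intros ny(1,2))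
        moreover have "gf y - \<tau> * gu y < 0"
        proof -
          have le1: "gf y - \<tau> * gu y \<le> P y * w y - \<beta> * f y" using ny(3,4) unfolding w_def by (simp add: algebra_simps)
          have "P y \<le> B" using Pb abs_ge_self order_trans by blast
          then have "P y * w y \<le> B * w y" using wge[of y] by (rule mult_right_mono)
          moreover have "\<beta> * f y > \<beta> * (f xs / 2)" using near(2) \<beta> by simp
          moreover have "\<beta> * (f xs / 2) = 2 * c" unfolding c_def by simp
          ultimately have "gf y - \<tau> * gu y < c - 2 * c" using near(1) le1 by linarith
          then show ?thesis using c0 by simp
        qed
        ultimately show "\<exists>D>0. ((\<lambda>x. - w' x) has_real_derivative D) (at y)" by (intro exI[of _ "- (gf y - \<tau> * gu y)"]) auto
      qed
    qed
    then show ?thesis using w'xs by simp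
  qed
  obtain \<xi> where xi: "xs < \<xi>" "\<xi> < s" "w s - w xs = (s - xs) * w' \<xi>"
    using MVT2[OF s(1), of w w'] dw by blast
  have "(s - xs) * w' \<xi> < 0" using negder[of \<xi>] xi s by (simp add: mult_pos_neg)
  then have "w s < 0" using xi wxs by simp
  then show False using wge[of s] by simp
qed



lemma hq_nonneg: "z \<in> holder_quotients f \<Longrightarrow> z \<ge> 0"
  unfolding holder_quotients_def by auto

lemma sup_le_holder:
  assumes b: "bounded (range f)" and h: "bdd_above (holder_quotients f)"
  shows "\<bar>f x\<bar> \<le> holder_norm f"
proof -
  obtain B where B: "\<forall>y\<in>range f. norm y \<le> B" using b bounded_iff by metis
  have bdd: "bdd_above (range (\<lambda>x. \<bar>f x\<bar>))" by (rule bdd_aboveI[of _ B]) (use B in auto)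
  have s1: "\<bar>f x\<bar> \<le> sup_norm f" unfolding sup_norm_def by (rule cSup_upper[OF _ bdd]) auto
  have mem: "\<bar>f 0 - f 1\<bar> / \<bar>(0::real) - 1\<bar> powr (1/2) \<in> holder_quotients f"
    unfolding holder_quotients_def by (rule CollectI) (rule exI[where x=0], rule exI[where x=1], simp)
  have "0 \<le> \<bar>f 0 - f 1\<bar> / \<bar>(0::real) - 1\<bar> powr (1/2)" by simp
  also have "\<dots> \<le> Sup (holder_quotients f)" by (rule cSup_upper[OF mem h])
  finally show ?thesis using s1 unfolding holder_norm_def by simp
qed

lemma hq_diff:
  assumes "bdd_above (holder_quotients f)" "bdd_above (holder_quotients g)"
  shows "bdd_above (holder_quotients (\<lambda>x. f x - g x))"
proof -
  obtain Sf where Sf: "\<forall>z\<in>holder_quotients f. z \<le> Sf" using assms(1) unfolding bdd_above_def by auto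
  obtain Sg where Sg: "\<forall>z\<in>holder_quotients g. z \<le> Sg" using assms(2) unfolding bdd_above_def by auto
  show ?thesis
  proof (rule bdd_aboveI[of _ "Sf + Sg"])
    fix z assume "z \<in> holder_quotients (\<lambda>x. f x - g x)"
    then obtain x y where xy: "x \<noteq> y" and z: "z = \<bar>(f x - g x) - (f y - g y)\<bar> / \<bar>x - y\<bar> powr (1/2)"
      unfolding holder_quotients_def by auto
    define p where "p = \<bar>x - y\<bar> powr (1/2)"
    have p: "p > 0" unfolding p_def using xy by simp
    have m1: "\<bar>f x - f y\<bar> / p \<le> Sf" using Sf xy unfolding holder_quotients_def p_def by blast
    have m2: "\<bar>g x - g y\<bar> / p \<le> Sg" using Sg xy unfolding holder_quotients_def p_def by blast
    have "\<bar>(f x - g x) - (f y - g y)\<bar> \<le> \<bar>f x - f y\<bar> + \<bar>g x - g y\<bar>" by linarith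
    then have "\<bar>(f x - g x) - (f y - g y)\<bar> / p \<le> (\<bar>f x - f y\<bar> + \<bar>g x - g y\<bar>) / p"
      using p by (simp add: divide_right_mono)
    also have "\<dots> = \<bar>f x - f y\<bar> / p + \<bar>g x - g y\<bar> / p" by (simp add: add_divide_distrib)
    finally show "z \<le> Sf + Sg" using m1 m2 z unfolding p_def by linarith
  qed
qed

lemma hq_lip:
  assumes lip: "\<forall>x y. \<bar>f x - f y\<bar> \<le> C * \<bar>x - y\<bar>" and C: "C \<ge> 0" and B: "\<forall>x. \<bar>f x\<bar> \<le> B"
  shows "bdd_above (holder_quotients f)"
proof (rule bdd_aboveI[of _ "C + 2 * B"])
  fix z assume "z \<in> holder_quotients f"
  then obtain x y where xy: "x \<noteq> y" and z: "z = \<bar>f x - f y\<bar> / \<bar>x - y\<bar> powr (1/2)"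
    unfolding holder_quotients_def by auto
  define dd where "dd = \<bar>x - y\<bar>"
  have dd: "dd > 0" unfolding dd_def using xy by simp
  have p: "\<bar>x - y\<bar> powr (1/2) = sqrt dd" unfolding dd_def by (simp add: powr_half_sqrt)
  have sq: "sqrt dd > 0" using dd by simp
  have B0: "B \<ge> 0" using B[rule_format, of 0] by simp
  have Bd: "\<bar>f x - f y\<bar> \<le> 2 * B" using B[rule_format, of x] B[rule_format, of y] by linarith
  show "z \<le> C + 2 * B"
  proof (cases "dd \<le> 1")
    case True
    have "\<bar>f x - f y\<bar> \<le> C * dd" using lip unfolding dd_def by blast
    also have "C * dd = C * sqrt dd * sqrt dd" using dd by (simp add: mult.assoc)
    finally have "\<bar>f x - f y\<bar> / sqrt dd \<le> C * sqrt dd" using sq by (simp add: divide_le_eq)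
    also have "C * sqrt dd \<le> C * 1" using True C dd by (intro mult_left_mono) auto
    finally show ?thesis using z p B0 by simp
  next
    case False
    then have "sqrt dd \<ge> 1" by simp
    then have "\<bar>f x - f y\<bar> / sqrt dd \<le> \<bar>f x - f y\<bar>" by (simp add: divide_le_eq mult_le_cancel_left1 order_trans)
    then show ?thesis using z p Bd C by simp
  qed
qed

lemma vprop:
  assumes L: "L > 0" and per: "L_periodic L v" and c: "C11_second v w"
  shows "\<exists>Lv Bv. Lv \<ge> 0 \<and> (\<forall>x y. \<bar>v x - v y\<bar> \<le> Lv * \<bar>x - y\<bar>) \<and> (\<forall>x. \<bar>v x\<bar> \<le> Bv)"
proof -
  obtain v' C where dv: "\<forall>x. (v has_real_derivative v' x) (at x)"
    and lip: "\<forall>x y. \<bar>v' x - v' y\<bar> \<le> C * \<bar>x - y\<bar>"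
    using c unfolding C11_second_def by blast
  have cv': "continuous_on UNIV v'" using lip_cont[OF lip] by simp
  have cv: "continuous_on UNIV v" using dv DERIV_isCont continuous_at_imp_continuous_on by blast
  have pv': "v' (x + L) = v' x" for x
  proof -
    have "((\<lambda>t. v (t + L)) has_real_derivative v' (x + L)) (at x)"
      using dv DERIV_shift by blast
    moreover have "(\<lambda>t. v (t + L)) = v" using per unfolding L_periodic_def by auto
    ultimately have "(v has_real_derivative v' (x + L)) (at x)" by simp
    then show ?thesis using dv DERIV_unique by blast
  qed
  have "L_periodic L (\<lambda>x. \<bar>v' x\<bar>)" unfolding L_periodic_def using pv' by simp
  moreover have "continuous_on UNIV (\<lambda>x. \<bar>v' x\<bar>)" using cv' by (intro continuous_intros)
  ultimately obtain m where m: "\<forall>x. \<bar>v' x\<bar> \<le> \<bar>v' m\<bar>" using per_max[OF L] by blast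
  have "L_periodic L (\<lambda>x. \<bar>v x\<bar>)" using per unfolding L_periodic_def by simp
  moreover have "continuous_on UNIV (\<lambda>x. \<bar>v x\<bar>)" using cv by (intro continuous_intros)
  ultimately obtain mb where mb: "\<forall>x. \<bar>v x\<bar> \<le> \<bar>v mb\<bar>" using per_max[OF L] by blast
  define M where "M = \<bar>v' m\<bar>"
  have lipv: "\<bar>v x - v y\<bar> \<le> M * \<bar>x - y\<bar>" if xy: "x < y" for x y
  proof -
    obtain z where "x < z" "z < y" "v y - v x = (y - x) * v' z"
      using MVT2[OF xy, of v v'] dv by blast
    then have "\<bar>v x - v y\<bar> = \<bar>(y - x) * v' z\<bar>" by (metis abs_minus_commute)
    also have "\<dots> = (y - x) * \<bar>v' z\<bar>" using xy by (simp add: abs_mult)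
    also have "\<dots> \<le> (y - x) * M" unfolding M_def using m xy by (intro mult_left_mono) auto
    finally show ?thesis using xy by (simp add: mult.commute)
  qed
  have "\<forall>x y. \<bar>v x - v y\<bar> \<le> M * \<bar>x - y\<bar>"
  proof (intro allI)
    fix x y :: real
    show "\<bar>v x - v y\<bar> \<le> M * \<bar>x - y\<bar>"
    proof (cases x y rule: linorder_cases)
      case less then show ?thesis using lipv by blast
    next
      case equal then show ?thesis unfolding M_def by simp
    next
      case greater then show ?thesis using lipv[of y x] by (simp add: abs_minus_commute)
    qed
  qed
  moreover have "M \<ge> 0" unfolding M_def by simp
  ultimately show ?thesis using mb by blast
qed



lemma keyineq:
  fixes W k \<beta> A0 p s \<gamma> A :: real
  assumes W: "W \<ge> (k * \<beta> - A0) * p - k * \<gamma>" and ps: "p > s" and s: "s > 0" and g: "\<gamma> \<le> \<beta> * s/2"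
    and K: "k * \<beta> * s/2 - A0 * s > 2 * A" and A0: "A0 \<ge> 0" and A: "A \<ge> 0" and b: "\<beta> > 0" and k: "k > 0"
  shows "W > 2 * A"
proof -
  have h1: "(k * \<beta>/2) * s > A0 * s" using K A by (simp add: algebra_simps)
  then have h2: "k * \<beta>/2 > A0" using s by (simp add: mult_less_cancel_right)
  have kb: "k * \<beta> > 0" using k b by simp
  have pos: "k * \<beta> - A0 > 0" using h2 kb by linarith
  have h3: "(k * \<beta> - A0) * p > (k * \<beta> - A0) * s" using pos ps by (simp add: mult_strict_left_mono)
  have h4: "k * \<gamma> \<le> k * (\<beta> * s/2)" using g k by (simp add: mult_left_mono)
  have e: "(k * \<beta> - A0) * s - k * (\<beta> * s/2) = k * \<beta> * s/2 - A0 * s" by (simp add: algebra_simps)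
  show ?thesis using W h3 h4 e K by linarith
qed

lemma wbound1:
  fixes w1 m a k om b p q lam Bm \<theta> U c2 o0 o1 Q \<Lambda> :: real
  assumes eq: "-(w1 + (m * (1 - 2 * a) - k * om * b) * p + k * om * a * q) = lam * p"
    and m: "\<bar>m\<bar> \<le> Bm" and a: "0 < a" "a \<le> \<theta>" "a \<le> U" and b: "c2 \<le> b" "0 < c2"
    and om: "o0 \<le> om" "om \<le> o1" "0 < o0" and k: "0 < k" and p: "0 < p" and q: "0 < q" "q \<le> Q"
    and lam: "lam \<le> \<Lambda>"
  shows "w1 \<ge> (k * (o0 * c2) - (Bm * (1+2 * U) + \<Lambda>)) * p - k * (o1 * \<theta> * Q)"
proof -
  have e: "w1 = k * (om * b) * p - m * (1-2 * a) * p - k * (om * a * q) - lam * p" using eq by (simp add: algebra_simps)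
  have h1: "o0 * c2 \<le> om * b" using om b by (intro mult_mono) auto
  have h1': "k * (o0 * c2) * p \<le> k * (om * b) * p" using h1 k p by (simp add: mult_left_mono mult_right_mono)
  have "\<bar>1 - 2 * a\<bar> \<le> 1 + 2 * U" using a by linarith
  then have "\<bar>m\<bar> * \<bar>1 - 2 * a\<bar> \<le> Bm * (1 + 2 * U)" using m by (intro mult_mono) auto
  moreover have "m * (1-2 * a) \<le> \<bar>m\<bar> * \<bar>1 - 2 * a\<bar>" by (metis abs_ge_self abs_mult)
  ultimately have h2: "m * (1-2 * a) \<le> Bm * (1+2 * U)" by linarith
  have h2': "m * (1-2 * a) * p \<le> Bm * (1+2 * U) * p" using h2 p by (simp add: mult_right_mono)
  have "om * a \<le> o1 * \<theta>" using om a by (intro mult_mono) auto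
  then have "om * a * q \<le> o1 * \<theta> * Q" using q om a by (intro mult_mono) auto
  then have h3': "k * (om * a * q) \<le> k * (o1 * \<theta> * Q)" using k by (simp add: mult_left_mono)
  have h4: "lam * p \<le> \<Lambda> * p" using lam p by (simp add: mult_right_mono)
  have r: "(k * (o0 * c2) - (Bm * (1+2 * U) + \<Lambda>)) * p - k * (o1 * \<theta> * Q)
      = k * (o0 * c2) * p - Bm * (1+2 * U) * p - k * (o1 * \<theta> * Q) - \<Lambda> * p" by (simp add: algebra_simps)
  show ?thesis unfolding r using e h1' h2' h3' h4 by linarith
qed

lemma wbound2:
  fixes w2 m a k om b p q lam Bm \<theta> U c1 o0 o1 P \<Lambda> \<alpha> d :: real
  assumes eq: "-(\<alpha> * k * om * b * p + d * w2 + (m * (1 - 2 * b) - \<alpha> * k * om * a) * q) = lam * q"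
    and m: "\<bar>m\<bar> \<le> Bm" and b: "0 < b" "b \<le> \<theta>" "b \<le> U" and a: "c1 \<le> a" "0 < c1"
    and om: "o0 \<le> om" "om \<le> o1" "0 < o0" and k: "0 < k" and q: "0 < q" and p: "0 < p" "p \<le> P"
    and lam: "lam \<le> \<Lambda>" and \<alpha>: "\<alpha> > 0"
  shows "d * w2 \<ge> (k * (\<alpha> * o0 * c1) - (Bm * (1+2 * U) + \<Lambda>)) * q - k * (\<alpha> * o1 * \<theta> * P)"
proof -
  have e: "d * w2 = k * (\<alpha> * om * a) * q - m * (1-2 * b) * q - k * (\<alpha> * om * b * p) - lam * q" using eq by (simp add: algebra_simps)
  have "o0 * c1 \<le> om * a" using om a by (intro mult_mono) auto
  then have h1: "\<alpha> * o0 * c1 \<le> \<alpha> * om * a" using \<alpha> by (simp add: mult.assoc mult_left_mono)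
  have h1': "k * (\<alpha> * o0 * c1) * q \<le> k * (\<alpha> * om * a) * q" using h1 k q by (simp add: mult_left_mono mult_right_mono)
  have "\<bar>1 - 2 * b\<bar> \<le> 1 + 2 * U" using b by linarith
  then have "\<bar>m\<bar> * \<bar>1 - 2 * b\<bar> \<le> Bm * (1 + 2 * U)" using m by (intro mult_mono) auto
  moreover have "m * (1-2 * b) \<le> \<bar>m\<bar> * \<bar>1 - 2 * b\<bar>" by (metis abs_ge_self abs_mult)
  ultimately have h2: "m * (1-2 * b) \<le> Bm * (1+2 * U)" by linarith
  have h2': "m * (1-2 * b) * q \<le> Bm * (1+2 * U) * q" using h2 q by (simp add: mult_right_mono)
  have "om * b \<le> o1 * \<theta>" using om b by (intro mult_mono) auto
  then have "om * b * p \<le> o1 * \<theta> * P" using p om b by (intro mult_mono) auto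
  then have "\<alpha> * (om * b * p) \<le> \<alpha> * (o1 * \<theta> * P)" using \<alpha> by (simp add: mult_left_mono)
  then have h3: "\<alpha> * om * b * p \<le> \<alpha> * o1 * \<theta> * P" by (simp add: mult.assoc)
  then have h3': "k * (\<alpha> * om * b * p) \<le> k * (\<alpha> * o1 * \<theta> * P)" using k by (simp add: mult_left_mono)
  have h4: "lam * q \<le> \<Lambda> * q" using lam q by (simp add: mult_right_mono)
  have r: "(k * (\<alpha> * o0 * c1) - (Bm * (1+2 * U) + \<Lambda>)) * q - k * (\<alpha> * o1 * \<theta> * P)
      = k * (\<alpha> * o0 * c1) * q - Bm * (1+2 * U) * q - k * (\<alpha> * o1 * \<theta> * P) - \<Lambda> * q" by (simp add: algebra_simps)
  show ?thesis unfolding r using e h1' h2' h3' h4 by linarith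
qed



lemma pos_lip: "\<bar>pospart a - pospart b\<bar> \<le> \<bar>a - b\<bar>"
  unfolding pospart_def by (auto simp: max_def)

lemma neg_lip: "\<bar>negpart a - negpart b\<bar> \<le> \<bar>a - b\<bar>"
  unfolding negpart_def by (auto simp: min_def)

lemma pos_bd: "\<bar>pospart a\<bar> \<le> \<bar>a\<bar>"
  unfolding pospart_def by (auto simp: max_def)

lemma neg_bd: "\<bar>negpart a\<bar> \<le> \<bar>a\<bar>"
  unfolding negpart_def by (auto simp: min_def)

lemma conv_bound:
  assumes u: "in_X L u" and lip: "\<forall>x y. \<bar>g x - g y\<bar> \<le> Cg * \<bar>x - y\<bar>" and Cg: "Cg \<ge> 0"
    and gb: "\<forall>x. \<bar>g x\<bar> \<le> Bg"
  shows "\<bar>u x - g x\<bar> \<le> holder_norm (\<lambda>x. u x - g x)"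
proof (rule sup_le_holder)
  have ub: "bounded (range u)" and uh: "bdd_above (holder_quotients u)" using u unfolding in_X_def by auto
  obtain a where a: "\<forall>y\<in>range u. norm y \<le> a" using ub bounded_iff by metis
  show "bounded (range (\<lambda>x. u x - g x))" unfolding bounded_iff
  proof (intro exI[of _ "a + Bg"] ballI)
    fix y assume "y \<in> range (\<lambda>x. u x - g x)"
    then obtain x where "y = u x - g x" by auto
    moreover have "\<bar>u x\<bar> \<le> a" using a by auto
    moreover have "\<bar>g x\<bar> \<le> Bg" using gb by auto
    ultimately show "norm y \<le> a + Bg" by simp
  qed
  show "bdd_above (holder_quotients (\<lambda>x. u x - g x))"
    by (rule hq_diff[OF uh hq_lip[OF lip Cg gb]])
qed

lemma sup_over_le: "(\<forall>x\<in>S. f x \<le> s) \<Longrightarrow> s \<ge> 0 \<Longrightarrow> sup_over S f \<le> s"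
  unfolding sup_over_def by (auto intro: cSup_least)

lemma normbound:
  fixes \<phi> \<psi> :: "real \<Rightarrow> real"
  assumes L: "L > 0" and p1: "L_periodic L \<phi>" and p2: "L_periodic L \<psi>"
    and c1: "\<forall>x. isCont \<phi> x" and c2: "\<forall>x. isCont \<psi> x"
    and pos1: "\<forall>x. \<phi> x > 0" and pos2: "\<forall>x. \<psi> x > 0" and \<alpha>: "\<alpha> > 0" and d: "d > 0"
    and n: "Sup ((\<lambda>x. \<alpha> * \<phi> x + d * \<psi> x) ` {0..L}) = 1"
  shows "\<forall>x. \<phi> x \<le> 1 / \<alpha>" "\<forall>x. \<psi> x \<le> 1 / d"
proof -
  define h where "h = (\<lambda>x. \<alpha> * \<phi> x + d * \<psi> x)"
  have ch: "continuous_on UNIV h" unfolding h_def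
    using c1 c2 by (intro continuous_at_imp_continuous_on ballI continuous_intros) auto
  have bdd: "bdd_above (h ` {0..L})"
    by (rule bounded_imp_bdd_above[OF compact_imp_bounded[OF compact_continuous_image[OF continuous_on_subset[OF ch subset_UNIV] compact_Icc]]])
  have hp: "L_periodic L h" using p1 p2 unfolding L_periodic_def h_def by simp
  have hle: "h x \<le> 1" for x
  proof -
    obtain y where y: "y \<in> {0..L}" "h x = h y" using per_red[OF L hp] by blast
    have "h y \<le> Sup (h ` {0..L})" by (rule cSup_upper[OF _ bdd]) (use y in auto)
    then show ?thesis using y n unfolding h_def by simp
  qed
  show "\<forall>x. \<phi> x \<le> 1 / \<alpha>"
  proof
    fix x
    have "\<alpha> * \<phi> x \<le> 1" using hle[of x] pos2 d unfolding h_def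
      by (smt (verit) mult_pos_pos)
    then show "\<phi> x \<le> 1 / \<alpha>" using \<alpha> by (simp add: le_divide_eq mult.commute)
  qed
  show "\<forall>x. \<psi> x \<le> 1 / d"
  proof
    fix x
    have "d * \<psi> x \<le> 1" using hle[of x] pos1 \<alpha> unfolding h_def
      by (smt (verit) mult_pos_pos)
    then show "\<psi> x \<le> 1 / d" using d by (simp add: le_divide_eq mult.commute)
  qed
qed

lemma Pbound:
  fixes k om b m a U Bm o1 :: real
  assumes "0 < k" "0 < om" "om \<le> o1" "0 < b" "b \<le> U" "\<bar>m\<bar> \<le> Bm" "0 < a" "a \<le> U"
  shows "\<bar>k * om * b - m * (1 - a)\<bar> \<le> k * o1 * U + Bm * (1 + U)"
proof -
  have "om * b \<le> o1 * U" using assms by (intro mult_mono) auto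
  then have h1: "k * (om * b) \<le> k * (o1 * U)" using assms by (simp add: mult_left_mono)
  have h1': "0 \<le> k * (om * b)" using assms by simp
  have "\<bar>1 - a\<bar> \<le> 1 + U" using assms by linarith
  then have "\<bar>m\<bar> * \<bar>1 - a\<bar> \<le> Bm * (1 + U)" using assms by (intro mult_mono) auto
  then have h2: "\<bar>m * (1 - a)\<bar> \<le> Bm * (1 + U)" by (simp add: abs_mult)
  have "\<bar>k * om * b - m * (1 - a)\<bar> \<le> \<bar>k * (om * b)\<bar> + \<bar>m * (1 - a)\<bar>"
    by (metis abs_triangle_ineq4 mult.assoc)
  also have "\<dots> \<le> k * (o1 * U) + Bm * (1 + U)" using h1 h1' h2 by simp
  finally show ?thesis by (simp add: mult.assoc)
qed

lemma ineqlam: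
  fixes w1 m a k om b p q lam Bm U :: real
  assumes eq: "-(w1 + (m * (1 - 2 * a) - k * om * b) * p + k * om * a * q) = lam * p"
    and "\<bar>m\<bar> \<le> Bm" "0 < a" "a \<le> U" "0 < p" "0 < q" "0 < k" "0 < om"
  shows "w1 \<le> (k * om * b - m * (1 - a)) * p - (lam - Bm * U) * p"
proof -
  have e: "w1 = k * om * b * p - m * (1 - 2 * a) * p - k * om * a * q - lam * p" using eq by (simp add: algebra_simps)
  have "m * a \<le> \<bar>m\<bar> * a" using assms by (simp add: mult_right_mono)
  also have "\<dots> \<le> Bm * U" using assms by (intro mult_mono) auto
  finally have "m * a * p \<le> Bm * U * p" using assms by (simp add: mult_right_mono)
  moreover have "0 \<le> k * om * a * q" using assms by simp
  moreover have "(k * om * b - m * (1 - a)) * p - (lam - Bm * U) * p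
     = k * om * b * p - m * (1 - 2 * a) * p - lam * p + (Bm * U * p - m * a * p)" by (simp add: algebra_simps)
  ultimately show ?thesis using e by linarith
qed

lemma equ_u:
  fixes wu m a k om b :: real
  assumes "- wu = m * (1 - a) * a - k * om * a * b"
  shows "wu = (k * om * b - m * (1 - a)) * a"
  using assms by (simp add: algebra_simps)



theorem lemma3p9:
  fixes L \<alpha> d \<eta> \<epsilon> k0 :: real
    and \<mu>1 \<mu>2 \<omega> v :: "real \<Rightarrow> real"
    and u1 u2 \<phi> \<psi> :: "real \<Rightarrow> real \<Rightarrow> real"
    and lam :: "real \<Rightarrow> real"
  assumes L: "L > 0" and \<alpha>: "\<alpha> > 0" and d: "d > 0"
    and \<eta>: "\<eta> > 0" and \<epsilon>: "\<epsilon> > 0"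
    and \<mu>1: "\<mu>1 \<in> borel_measurable lebesgue" "bounded (range \<mu>1)" "\<forall>x. \<mu>1 x > 0" "L_periodic L \<mu>1"
    and \<mu>2: "\<mu>2 \<in> borel_measurable lebesgue" "bounded (range \<mu>2)" "\<forall>x. \<mu>2 x > 0" "L_periodic L \<mu>2"
    and \<omega>: "smooth_fun \<omega>" "\<forall>x. \<omega> x > 0" "L_periodic L \<omega>"
    and v_per: "L_periodic L v"
    and v_sign: "\<exists>x. v x > 0" "\<exists>x. v x < 0"
    and v_eq: "\<exists>w. C11_second v w \<and> (AE x in lebesgue.
        - w x = \<mu>1 x / \<alpha> * (\<alpha> - v x) * pospart (v x)
                - \<mu>2 x / d\<^sup>2 * (d + v x) * negpart (v x))"
    and k0: "k0 > 0"
    and u_O: "\<forall>k>k0. O_eps L \<alpha> d v \<eta> \<epsilon> (u1 k) (u2 k)"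
    and u_eq: "\<forall>k>k0. \<exists>w1 w2. C11_second (u1 k) w1 \<and> C11_second (u2 k) w2
        \<and> (AE x in lebesgue. - w1 x = \<mu>1 x * (1 - u1 k x) * u1 k x - k * \<omega> x * u1 k x * u2 k x)
        \<and> (AE x in lebesgue. - d * w2 x = \<mu>2 x * (1 - u2 k x) * u2 k x - \<alpha> * k * \<omega> x * u1 k x * u2 k x)"
    and u_lim: "((\<lambda>k. holder_norm (\<lambda>x. u1 k x - pospart (v x) / \<alpha>)) \<longlongrightarrow> 0) at_top"
               "((\<lambda>k. holder_norm (\<lambda>x. u2 k x - negpart (v x) / d)) \<longlongrightarrow> 0) at_top"
    and eig: "\<forall>k>k0. L_periodic L (\<phi> k) \<and> L_periodic L (\<psi> k)
        \<and> (\<forall>x. \<phi> k x > 0) \<and> (\<forall>x. \<psi> k x > 0)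
        \<and> (\<exists>w1 w2. C11_second (\<phi> k) w1 \<and> C11_second (\<psi> k) w2
          \<and> (AE x in lebesgue. - (w1 x + (\<mu>1 x * (1 - 2 * u1 k x) - k * \<omega> x * u2 k x) * \<phi> k x
                                 + k * \<omega> x * u1 k x * \<psi> k x) = lam k * \<phi> k x)
          \<and> (AE x in lebesgue. - (\<alpha> * k * \<omega> x * u2 k x * \<phi> k x + d * w2 x
                                 + (\<mu>2 x * (1 - 2 * u2 k x) - \<alpha> * k * \<omega> x * u1 k x) * \<psi> k x)
                              = lam k * \<psi> k x))"
    and norm: "\<forall>k>k0. Sup ((\<lambda>x. \<alpha> * \<phi> k x + d * \<psi> k x) ` {0..L}) = 1"
  shows "\<forall>\<epsilon>'>0. \<forall>\<delta>>0. \<exists>kb>k0. \<forall>k\<ge>kb.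
           sup_over {x. negpart (v x) > \<epsilon>'} (\<phi> k) + sup_over {x. pospart (v x) > \<epsilon>'} (\<psi> k) \<le> \<delta>"
proof (intro allI impI)
  fix \<epsilon>' \<delta> :: real
  assume e0: "\<epsilon>' > 0" and d0: "\<delta> > 0"
  obtain wv where "C11_second v wv" using v_eq by blast
  then obtain Lv Bv where Lv: "Lv \<ge> 0" "\<forall>x y. \<bar>v x - v y\<bar> \<le> Lv * \<bar>x - y\<bar>" and Bv: "\<forall>x. \<bar>v x\<bar> \<le> Bv"
    using vprop[OF L v_per] by blast
  have Bv0: "Bv \<ge> 0" using Bv[rule_format, of 0] by simp
  have "\<omega> differentiable (at x)" for x using \<omega>(1) unfolding smooth_fun_def by (metis funpow_0)
  then have "isCont \<omega> x" for x using differentiable_imp_continuous_within by blast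
  then have c\<omega>: "continuous_on UNIV \<omega>" by (simp add: continuous_at_imp_continuous_on)
  obtain xm where xm: "\<forall>x. \<omega> xm \<le> \<omega> x" using per_min[OF L \<omega>(3) c\<omega>] by blast
  obtain xM where xM: "\<forall>x. \<omega> x \<le> \<omega> xM" using per_max[OF L \<omega>(3) c\<omega>] by blast
  define \<omega>0 where "\<omega>0 = \<omega> xm"
  define \<omega>1 where "\<omega>1 = \<omega> xM"
  have \<omega>0: "\<omega>0 > 0" unfolding \<omega>0_def using \<omega>(2) by simp
  have \<omega>1: "\<omega>1 \<ge> \<omega>0" unfolding \<omega>1_def \<omega>0_def using xM by simp
  have \<omega>b: "\<omega>0 \<le> \<omega> x" "\<omega> x \<le> \<omega>1" for x unfolding \<omega>0_def \<omega>1_def using xm xM by auto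
  obtain B1 where B1: "\<forall>y\<in>range \<mu>1. norm y \<le> B1" using \<mu>1(2) bounded_iff by metis
  obtain B2 where B2: "\<forall>y\<in>range \<mu>2. norm y \<le> B2" using \<mu>2(2) bounded_iff by metis
  define Bm where "Bm = max B1 B2"
  have Bm1: "\<bar>\<mu>1 x\<bar> \<le> Bm" for x
  proof -
    have "\<bar>\<mu>1 x\<bar> \<le> B1" using B1 by (metis rangeI real_norm_def)
    then show ?thesis unfolding Bm_def by simp
  qed
  have Bm2: "\<bar>\<mu>2 x\<bar> \<le> Bm" for x
  proof -
    have "\<bar>\<mu>2 x\<bar> \<le> B2" using B2 by (metis rangeI real_norm_def)
    then show ?thesis unfolding Bm_def by simp
  qed
  have Bm0: "Bm \<ge> 0" using Bm1[of 0] by simp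
  define g1 where "g1 = (\<lambda>x. pospart (v x) / \<alpha>)"
  define g2 where "g2 = (\<lambda>x. negpart (v x) / d)"
  have g1l: "\<forall>x y. \<bar>g1 x - g1 y\<bar> \<le> (Lv / \<alpha>) * \<bar>x - y\<bar>"
  proof (intro allI)
    fix x y
    have "\<bar>g1 x - g1 y\<bar> = \<bar>pospart (v x) - pospart (v y)\<bar> / \<alpha>" unfolding g1_def using \<alpha>
      by (simp add: diff_divide_distrib[symmetric])
    also have "\<dots> \<le> \<bar>v x - v y\<bar> / \<alpha>" using \<alpha> pos_lip by (simp add: divide_right_mono)
    also have "\<dots> \<le> (Lv * \<bar>x - y\<bar>) / \<alpha>" using \<alpha> Lv(2) by (simp add: divide_right_mono)
    finally show "\<bar>g1 x - g1 y\<bar> \<le> (Lv / \<alpha>) * \<bar>x - y\<bar>" by simp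
  qed
  have g2l: "\<forall>x y. \<bar>g2 x - g2 y\<bar> \<le> (Lv / d) * \<bar>x - y\<bar>"
  proof (intro allI)
    fix x y
    have "\<bar>g2 x - g2 y\<bar> = \<bar>negpart (v x) - negpart (v y)\<bar> / d" unfolding g2_def using d
      by (simp add: diff_divide_distrib[symmetric])
    also have "\<dots> \<le> \<bar>v x - v y\<bar> / d" using d neg_lip by (simp add: divide_right_mono)
    also have "\<dots> \<le> (Lv * \<bar>x - y\<bar>) / d" using d Lv(2) by (simp add: divide_right_mono)
    finally show "\<bar>g2 x - g2 y\<bar> \<le> (Lv / d) * \<bar>x - y\<bar>" by simp
  qed
  have g1b: "\<forall>x. \<bar>g1 x\<bar> \<le> Bv / \<alpha>"
  proof
    fix x
    have "\<bar>pospart (v x)\<bar> \<le> Bv" using pos_bd Bv order_trans by blast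
    then show "\<bar>g1 x\<bar> \<le> Bv / \<alpha>" unfolding g1_def using \<alpha> by (simp add: divide_right_mono)
  qed
  have g2b: "\<forall>x. \<bar>g2 x\<bar> \<le> Bv / d"
  proof
    fix x
    have "\<bar>negpart (v x)\<bar> \<le> Bv" using neg_bd Bv order_trans by blast
    then show "\<bar>g2 x\<bar> \<le> Bv / d" unfolding g2_def using d by (simp add: divide_right_mono)
  qed
  have Lva: "Lv / \<alpha> \<ge> 0" "Lv / d \<ge> 0" using Lv \<alpha> d by auto
  define s where "s = \<delta> / 2"
  have s0: "s > 0" unfolding s_def using d0 by simp
  define c1 where "c1 = \<epsilon>' / (4 * \<alpha>)"
  define c2 where "c2 = \<epsilon>' / (4 * d)"
  have c1: "c1 > 0" unfolding c1_def using e0 \<alpha> by simp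
  have c2: "c2 > 0" unfolding c2_def using e0 d by simp
  define \<beta>1 where "\<beta>1 = \<omega>0 * c2"
  define \<beta>2 where "\<beta>2 = \<alpha> * \<omega>0 * c1"
  have \<beta>1: "\<beta>1 > 0" unfolding \<beta>1_def using \<omega>0 c2 by simp
  have \<beta>2: "\<beta>2 > 0" unfolding \<beta>2_def using \<omega>0 c1 \<alpha> by simp
  have \<omega>1p: "\<omega>1 > 0" using \<omega>0 \<omega>1 by simp
  define \<theta> where "\<theta> = min (min 1 (min c1 c2)) (min (\<beta>1 * s * d / (2 * \<omega>1)) (\<beta>2 * s / (2 * \<omega>1)))"
  have \<theta>0: "\<theta> > 0" unfolding \<theta>_def using c1 c2 \<beta>1 \<beta>2 s0 d \<omega>1p by simp
  have \<theta>1: "\<theta> \<le> 1" "\<theta> \<le> c1" "\<theta> \<le> c2" "\<theta> \<le> \<beta>1 * s * d / (2 * \<omega>1)" "\<theta> \<le> \<beta>2 * s / (2 * \<omega>1)"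
    unfolding \<theta>_def by auto
  have \<gamma>1: "\<omega>1 * \<theta> * (1 / d) \<le> \<beta>1 * s / 2"
  proof -
    have h: "\<theta> * (2 * \<omega>1) \<le> \<beta>1 * s * d" using \<theta>1(4) \<omega>1p by (simp add: le_divide_eq)
    have "\<omega>1 * \<theta> = \<theta> * (2 * \<omega>1) / 2" by simp
    then have "\<omega>1 * \<theta> \<le> \<beta>1 * s * d / 2" using h by linarith
    then have "\<omega>1 * \<theta> / d \<le> \<beta>1 * s * d / 2 / d" by (rule divide_right_mono) (use d in auto)
    moreover have "\<beta>1 * s * d / 2 / d = \<beta>1 * s / 2" using d by simp
    moreover have "\<omega>1 * \<theta> * (1 / d) = \<omega>1 * \<theta> / d" by simp
    ultimately show ?thesis by linarith
  qed
  have \<gamma>2: "\<alpha> * \<omega>1 * \<theta> * (1 / \<alpha>) \<le> \<beta>2 * s / 2"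
  proof -
    have h: "\<theta> * (2 * \<omega>1) \<le> \<beta>2 * s" using \<theta>1(5) \<omega>1p by (simp add: le_divide_eq)
    have "\<omega>1 * \<theta> = \<theta> * (2 * \<omega>1) / 2" by simp
    then have "\<omega>1 * \<theta> \<le> \<beta>2 * s / 2" using h by linarith
    then show ?thesis using \<alpha> by simp
  qed
  define U where "U = max (Bv / \<alpha>) (Bv / d) + 1"
  have U12: "Bv / \<alpha> + 1 \<le> U" "Bv / d + 1 \<le> U" unfolding U_def by auto
  have "Bv / \<alpha> \<ge> 0" using Bv0 \<alpha> by simp
  then have U: "Bv / \<alpha> + 1 \<le> U" "Bv / d + 1 \<le> U" "U > 0" using U12 by linarith+
  define \<Lambda> where "\<Lambda> = Bm * U"
  define A0 where "A0 = Bm * (1 + 2 * U) + \<Lambda>"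
  have A0: "A0 \<ge> 0" unfolding A0_def \<Lambda>_def using Bm0 U by simp
  define r where "r = \<epsilon>' / (2 * (Lv + 1))"
  have r0: "r > 0" unfolding r_def using e0 Lv by simp
  have Lvr: "Lv * r < \<epsilon>' / 2"
  proof -
    have "Lv * r = \<epsilon>' / 2 * (Lv / (Lv + 1))" unfolding r_def using Lv by (simp add: field_simps)
    also have "\<dots> < \<epsilon>' / 2 * 1" using e0 Lv by (intro mult_strict_left_mono) auto
    finally show ?thesis by simp
  qed
  define A\<phi> where "A\<phi> = (1 / \<alpha>) / r^2"
  define A\<psi> where "A\<psi> = (1 / d) / r^2"
  have A\<phi>: "A\<phi> \<ge> 0" "A\<phi> * r^2 = 1 / \<alpha>" unfolding A\<phi>_def using \<alpha> r0 by auto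
  have A\<psi>: "A\<psi> \<ge> 0" "A\<psi> * r^2 = 1 / d" "d * A\<psi> \<ge> 0" unfolding A\<psi>_def using d r0 by auto
  define K1 where "K1 = 2 * (2 * A\<phi> + A0 * s) / (\<beta>1 * s)"
  define K2 where "K2 = 2 * (2 * (d * A\<psi>) + A0 * s) / (\<beta>2 * s)"
  define D1 where "D1 = (\<lambda>k. holder_norm (\<lambda>x. u1 k x - pospart (v x) / \<alpha>))"
  define D2 where "D2 = (\<lambda>k. holder_norm (\<lambda>x. u2 k x - negpart (v x) / d))"
  have "eventually (\<lambda>k. D1 k < \<theta>) at_top" unfolding D1_def using order_tendstoD(2)[OF u_lim(1) \<theta>0] .
  moreover have "eventually (\<lambda>k. D2 k < \<theta>) at_top" unfolding D2_def using order_tendstoD(2)[OF u_lim(2) \<theta>0] .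
  ultimately have "eventually (\<lambda>k. D1 k < \<theta> \<and> D2 k < \<theta>) at_top" by eventually_elim auto
  then obtain Nc where Nc: "\<forall>k\<ge>Nc. D1 k < \<theta> \<and> D2 k < \<theta>" unfolding eventually_at_top_linorder by blast
  define kb where "kb = max (max (k0 + 1) Nc) (max (K1 + 1) (K2 + 1))"
  show "\<exists>kb>k0. \<forall>k\<ge>kb. sup_over {x. \<epsilon>' < negpart (v x)} (\<phi> k) + sup_over {x. \<epsilon>' < pospart (v x)} (\<psi> k) \<le> \<delta>"
  proof (intro exI[of _ kb] conjI allI impI)
    show "kb > k0" unfolding kb_def by simp
    fix k assume kkb: "k \<ge> kb"
    have kk0: "k > k0" and kNc: "k \<ge> Nc" and kK1: "k > K1" and kK2: "k > K2" using kkb unfolding kb_def by auto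
    have k0': "k > 0" using kk0 k0 by simp
    have DD: "D1 k < \<theta>" "D2 k < \<theta>" using Nc kNc by auto
    have uO: "O_eps L \<alpha> d v \<eta> \<epsilon> (u1 k) (u2 k)" using u_O kk0 by blast
    then have uX: "in_X L (u1 k)" "in_X L (u2 k)" and upos: "\<forall>x. u1 k x > 0" "\<forall>x. u2 k x > 0"
      unfolding O_eps_def by auto
    have cb1: "\<bar>u1 k x - g1 x\<bar> < \<theta>" for x
    proof -
      have "\<bar>u1 k x - g1 x\<bar> \<le> holder_norm (\<lambda>x. u1 k x - g1 x)" by (rule conv_bound[OF uX(1) g1l Lva(1) g1b])
      also have "\<dots> = D1 k" unfolding D1_def g1_def by simp
      finally show ?thesis using DD by simp
    qed
    have cb2: "\<bar>u2 k x - g2 x\<bar> < \<theta>" for x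
    proof -
      have "\<bar>u2 k x - g2 x\<bar> \<le> holder_norm (\<lambda>x. u2 k x - g2 x)" by (rule conv_bound[OF uX(2) g2l Lva(2) g2b])
      also have "\<dots> = D2 k" unfolding D2_def g2_def by simp
      finally show ?thesis using DD by simp
    qed
    have uU: "u1 k x \<le> U" "u2 k x \<le> U" for x
    proof -
      have a1: "u1 k x < g1 x + \<theta>" "u2 k x < g2 x + \<theta>" using cb1[of x] cb2[of x] by (auto simp: abs_less_iff)
      have a2: "g1 x \<le> Bv / \<alpha>" "g2 x \<le> Bv / d" using g1b g2b by (auto simp: abs_le_iff)
      show "u1 k x \<le> U" "u2 k x \<le> U" using a1 a2 \<theta>1(1) U by linarith+
    qed
    obtain wu1 wu2 where ueq: "C11_second (u1 k) wu1" "C11_second (u2 k) wu2"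
        "AE x in lebesgue. - wu1 x = \<mu>1 x * (1 - u1 k x) * u1 k x - k * \<omega> x * u1 k x * u2 k x"
      using u_eq kk0 by blast
    have E: "L_periodic L (\<phi> k) \<and> L_periodic L (\<psi> k) \<and> (\<forall>x. \<phi> k x > 0) \<and> (\<forall>x. \<psi> k x > 0)
        \<and> (\<exists>w1 w2. C11_second (\<phi> k) w1 \<and> C11_second (\<psi> k) w2
          \<and> (AE x in lebesgue. - (w1 x + (\<mu>1 x * (1 - 2 * u1 k x) - k * \<omega> x * u2 k x) * \<phi> k x
                                 + k * \<omega> x * u1 k x * \<psi> k x) = lam k * \<phi> k x)
          \<and> (AE x in lebesgue. - (\<alpha> * k * \<omega> x * u2 k x * \<phi> k x + d * w2 x
                                 + (\<mu>2 x * (1 - 2 * u2 k x) - \<alpha> * k * \<omega> x * u1 k x) * \<psi> k x)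
                              = lam k * \<psi> k x))" using eig kk0 by blast
    then have per\<phi>: "L_periodic L (\<phi> k)" and per\<psi>: "L_periodic L (\<psi> k)"
      and pos\<phi>: "\<forall>x. \<phi> k x > 0" and pos\<psi>: "\<forall>x. \<psi> k x > 0" by auto
    from E obtain w1 w2 where C\<phi>: "C11_second (\<phi> k) w1" and C\<psi>: "C11_second (\<psi> k) w2"
      and eq\<phi>: "AE x in lebesgue. - (w1 x + (\<mu>1 x * (1 - 2 * u1 k x) - k * \<omega> x * u2 k x) * \<phi> k x
                                 + k * \<omega> x * u1 k x * \<psi> k x) = lam k * \<phi> k x"
      and eq\<psi>: "AE x in lebesgue. - (\<alpha> * k * \<omega> x * u2 k x * \<phi> k x + d * w2 x
                                 + (\<mu>2 x * (1 - 2 * u2 k x) - \<alpha> * k * \<omega> x * u1 k x) * \<psi> k x)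
                              = lam k * \<psi> k x" by blast
    obtain \<phi>' C\<phi>c where d\<phi>: "\<forall>x. (\<phi> k has_real_derivative \<phi>' x) (at x)"
      and l\<phi>: "\<forall>x y. \<bar>\<phi>' x - \<phi>' y\<bar> \<le> C\<phi>c * \<bar>x - y\<bar>" and dd\<phi>: "AE x in lebesgue. (\<phi>' has_real_derivative w1 x) (at x)"
      using C\<phi> unfolding C11_second_def by blast
    obtain \<psi>' C\<psi>c where d\<psi>: "\<forall>x. (\<psi> k has_real_derivative \<psi>' x) (at x)"
      and l\<psi>: "\<forall>x y. \<bar>\<psi>' x - \<psi>' y\<bar> \<le> C\<psi>c * \<bar>x - y\<bar>" and dd\<psi>: "AE x in lebesgue. (\<psi>' has_real_derivative w2 x) (at x)"
      using C\<psi> unfolding C11_second_def by blast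
    obtain u1' Cuc where du: "\<forall>x. (u1 k has_real_derivative u1' x) (at x)"
      and lu: "\<forall>x y. \<bar>u1' x - u1' y\<bar> \<le> Cuc * \<bar>x - y\<bar>" and ddu: "AE x in lebesgue. (u1' has_real_derivative wu1 x) (at x)"
      using ueq(1) unfolding C11_second_def by blast
    have nb: "\<forall>x. \<phi> k x \<le> 1 / \<alpha>" "\<forall>x. \<psi> k x \<le> 1 / d"
      using normbound[OF L per\<phi> per\<psi> _ _ pos\<phi> pos\<psi> \<alpha> d] norm kk0 d\<phi> d\<psi> DERIV_isCont by blast+
    have lamb: "lam k \<le> \<Lambda>"
    proof (rule ccontr)
      assume "\<not> lam k \<le> \<Lambda>"
      then have bpos: "lam k - Bm * U > 0" unfolding \<Lambda>_def by simp
      show False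
      proof (rule lambda_bound[OF L _ _ pos\<phi> upos(1) d\<phi> du l\<phi> lu dd\<phi> ddu _ _ _ bpos])
        show "\<forall>x. \<phi> k (x + L) = \<phi> k x" using per\<phi> unfolding L_periodic_def by blast
        show "\<forall>x. u1 k (x + L) = u1 k x" using uX(1) unfolding in_X_def L_periodic_def by blast
        show "\<forall>t. \<bar>k * \<omega> t * u2 k t - \<mu>1 t * (1 - u1 k t)\<bar> \<le> k * \<omega>1 * U + Bm * (1 + U)"
          using Pbound k0' \<omega>(2) \<omega>b upos uU Bm1 by blast
        show "AE t in lebesgue. w1 t \<le> (k * \<omega> t * u2 k t - \<mu>1 t * (1 - u1 k t)) * \<phi> k t - (lam k - Bm * U) * \<phi> k t"
          using eq\<phi>
        proof eventually_elim
          case (elim t)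
          show ?case by (rule ineqlam[OF elim Bm1]) (use upos uU pos\<phi> pos\<psi> k0' \<omega>(2) in auto)
        qed
        show "AE t in lebesgue. wu1 t = (k * \<omega> t * u2 k t - \<mu>1 t * (1 - u1 k t)) * u1 k t"
          using ueq(3) by eventually_elim (rule equ_u)
      qed
    qed
    have part1: "\<phi> k x0 \<le> s" if vx0: "v x0 < - \<epsilon>'" for x0
    proof (rule comparison[OF d\<phi> l\<phi> dd\<phi> r0 A\<phi>(1)])
      show "\<phi> k (x0 - r) < s + A\<phi> * r^2" using nb(1)[rule_format, of "x0 - r"] A\<phi>(2) s0 by linarith
      show "\<phi> k (x0 + r) < s + A\<phi> * r^2" using nb(1)[rule_format, of "x0 + r"] A\<phi>(2) s0 by linarith
      show "AE t in lebesgue. x0 - r < t \<longrightarrow> t < x0 + r \<longrightarrow> s + A\<phi> * (t - x0)^2 < \<phi> k t \<longrightarrow> 2 * A\<phi> < w1 t"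
        using eq\<phi>
      proof eventually_elim
        case (elim t)
        show ?case
        proof (intro impI)
          assume t1: "x0 - r < t" and t2: "t < x0 + r" and t3: "s + A\<phi> * (t - x0)^2 < \<phi> k t"
          have "\<bar>v t - v x0\<bar> \<le> Lv * \<bar>t - x0\<bar>" using Lv(2) by blast
          also have "\<dots> \<le> Lv * r" using t1 t2 Lv by (intro mult_left_mono) auto
          finally have vt: "v t < - (\<epsilon>' / 2)" using Lvr vx0 by linarith
          have g1t: "g1 t = 0" unfolding g1_def pospart_def using vt e0 by simp
          have g2t: "g2 t = (- v t) / d" unfolding g2_def negpart_def using vt e0 by simp
          have "\<epsilon>' / 2 < - v t" using vt by linarith
          then have "(\<epsilon>' / 2) / d < (- v t) / d" by (rule divide_strict_right_mono) (use d in auto)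
          moreover have "(\<epsilon>' / 2) / d = 2 * c2" unfolding c2_def by simp
          ultimately have g2t': "g2 t > 2 * c2" using g2t by simp
          have u1t: "u1 k t \<le> \<theta>" using cb1[of t] g1t by simp
          have u2t: "u2 k t \<ge> c2" using cb2[of t] g2t' \<theta>1(3) by linarith
          have "A\<phi> * (t - x0)^2 \<ge> 0" using A\<phi>(1) by simp
          then have pst: "\<phi> k t > s" using t3 by linarith
          have W: "w1 t \<ge> (k * (\<omega>0 * c2) - (Bm * (1 + 2 * U) + \<Lambda>)) * \<phi> k t - k * (\<omega>1 * \<theta> * (1 / d))"
            by (rule wbound1[OF elim Bm1]) (use upos uU u1t u2t c2 \<omega>b \<omega>0 k0' pos\<phi> pos\<psi> nb lamb in auto)
          have Kx: "k * \<beta>1 * s / 2 - A0 * s > 2 * A\<phi>"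
          proof -
            have "k * (\<beta>1 * s) > 2 * (2 * A\<phi> + A0 * s)" using kK1 \<beta>1 s0 unfolding K1_def by (simp add: pos_divide_less_eq)
            then show ?thesis by (simp add: algebra_simps)
          qed
          show "2 * A\<phi> < w1 t"
          proof (rule keyineq[where \<gamma>="\<omega>1 * \<theta> * (1 / d)", OF _ pst s0 _ Kx A0 A\<phi>(1) \<beta>1 k0'])
            show "(k * \<beta>1 - A0) * \<phi> k t - k * (\<omega>1 * \<theta> * (1 / d)) \<le> w1 t" using W by (simp only: \<beta>1_def A0_def)
            show "\<omega>1 * \<theta> * (1 / d) \<le> \<beta>1 * s / 2" by (rule \<gamma>1)
          qed
        qed
      qed
    qed
    have part2: "\<psi> k x0 \<le> s" if vx0: "v x0 > \<epsilon>'" for x0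
    proof (rule comparison[OF d\<psi> l\<psi> dd\<psi> r0 A\<psi>(1)])
      show "\<psi> k (x0 - r) < s + A\<psi> * r^2" using nb(2)[rule_format, of "x0 - r"] A\<psi>(2) s0 by linarith
      show "\<psi> k (x0 + r) < s + A\<psi> * r^2" using nb(2)[rule_format, of "x0 + r"] A\<psi>(2) s0 by linarith
      show "AE t in lebesgue. x0 - r < t \<longrightarrow> t < x0 + r \<longrightarrow> s + A\<psi> * (t - x0)^2 < \<psi> k t \<longrightarrow> 2 * A\<psi> < w2 t"
        using eq\<psi>
      proof eventually_elim
        case (elim t)
        show ?case
        proof (intro impI)
          assume t1: "x0 - r < t" and t2: "t < x0 + r" and t3: "s + A\<psi> * (t - x0)^2 < \<psi> k t"
          have "\<bar>v t - v x0\<bar> \<le> Lv * \<bar>t - x0\<bar>" using Lv(2) by blast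
          also have "\<dots> \<le> Lv * r" using t1 t2 Lv by (intro mult_left_mono) auto
          finally have vt: "v t > \<epsilon>' / 2" using Lvr vx0 by linarith
          have g2t: "g2 t = 0" unfolding g2_def negpart_def using vt e0 by simp
          have g1t: "g1 t = v t / \<alpha>" unfolding g1_def pospart_def using vt e0 by simp
          have "(\<epsilon>' / 2) / \<alpha> < v t / \<alpha>" using vt by (rule divide_strict_right_mono) (use \<alpha> in auto)
          moreover have "(\<epsilon>' / 2) / \<alpha> = 2 * c1" unfolding c1_def by simp
          ultimately have g1t': "g1 t > 2 * c1" using g1t by simp
          have u2t: "u2 k t \<le> \<theta>" using cb2[of t] g2t by simp
          have u1t: "u1 k t \<ge> c1" using cb1[of t] g1t' \<theta>1(2) by linarith
          have "A\<psi> * (t - x0)^2 \<ge> 0" using A\<psi>(1) by simp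
          then have pst: "\<psi> k t > s" using t3 by linarith
          have W: "d * w2 t \<ge> (k * (\<alpha> * \<omega>0 * c1) - (Bm * (1 + 2 * U) + \<Lambda>)) * \<psi> k t - k * (\<alpha> * \<omega>1 * \<theta> * (1 / \<alpha>))"
            by (rule wbound2[OF elim Bm2]) (use upos uU u1t u2t c1 \<omega>b \<omega>0 k0' pos\<phi> pos\<psi> nb lamb \<alpha> in auto)
          have Kx: "k * \<beta>2 * s / 2 - A0 * s > 2 * (d * A\<psi>)"
          proof -
            have "k * (\<beta>2 * s) > 2 * (2 * (d * A\<psi>) + A0 * s)" using kK2 \<beta>2 s0 unfolding K2_def by (simp add: pos_divide_less_eq)
            then show ?thesis by (simp add: algebra_simps)
          qed
          have "2 * (d * A\<psi>) < d * w2 t"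
          proof (rule keyineq[where \<gamma>="\<alpha> * \<omega>1 * \<theta> * (1 / \<alpha>)", OF _ pst s0 _ Kx A0 A\<psi>(3) \<beta>2 k0'])
            show "(k * \<beta>2 - A0) * \<psi> k t - k * (\<alpha> * \<omega>1 * \<theta> * (1 / \<alpha>)) \<le> d * w2 t" using W by (simp only: \<beta>2_def A0_def)
            show "\<alpha> * \<omega>1 * \<theta> * (1 / \<alpha>) \<le> \<beta>2 * s / 2" by (rule \<gamma>2)
          qed
          then have "d * (2 * A\<psi>) < d * w2 t" by (simp add: algebra_simps)
          then show "2 * A\<psi> < w2 t" using d by simp
        qed
      qed
    qed
    have S1: "sup_over {x. \<epsilon>' < negpart (v x)} (\<phi> k) \<le> s"
    proof (rule sup_over_le)
      show "\<forall>x\<in>{x. \<epsilon>' < negpart (v x)}. \<phi> k x \<le> s"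
      proof
        fix x assume "x \<in> {x. \<epsilon>' < negpart (v x)}"
        then have "v x < - \<epsilon>'" unfolding negpart_def using e0 by (auto simp: min_def split: if_splits)
        then show "\<phi> k x \<le> s" by (rule part1)
      qed
    qed (use s0 in simp)
    have S2: "sup_over {x. \<epsilon>' < pospart (v x)} (\<psi> k) \<le> s"
    proof (rule sup_over_le)
      show "\<forall>x\<in>{x. \<epsilon>' < pospart (v x)}. \<psi> k x \<le> s"
      proof
        fix x assume "x \<in> {x. \<epsilon>' < pospart (v x)}"
        then have "v x > \<epsilon>'" unfolding pospart_def using e0 by (auto simp: max_def split: if_splits)
        then show "\<psi> k x \<le> s" by (rule part2)
      qed
    qed (use s0 in simp)
    show "sup_over {x. \<epsilon>' < negpart (v x)} (\<phi> k) + sup_over {x. \<epsilon>' < pospart (v x)} (\<psi> k) \<le> \<delta>"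
      using S1 S2 unfolding s_def by simp
  qed
qed


end
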